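(* Consider the no-show model with homogeneous costs in the context. For $p\ge1$, $j\in[N]$, $\rho\ge0$, $\mathbf s\in\mathcal S$, let $\omega'_j(\rho,\mathbf s)=\sup_{\boldsymbol\xi\in\Xi}\{g(\mathbf s,\boldsymbol\xi)-\rho\|\boldsymbol\xi-\widehat{\boldsymbol\xi}^j\|_p^p\}$. Then $$\omega'_j(\rho,\mathbf s)=\sup_{\boldsymbol\lambda\in\Lambda,\ \mathbf y\in\mathcal Y(\boldsymbol\lambda)}\sum_{i=1}^nf_{ij}(\lambda_i,y_i),\qquad f_{ij}(\lambda_i,y_i):=\sup_{u^L_i\lambda_i\le\mu_i\le u^U_i\lambda_i}\{y_i(\mu_i-s_i)-\rho|\mu_i-\widehat\mu^j_i|^p-\rho|\lambda_i-\widehat\lambda^j_i|^p\}.$$ Moreover, without loss of optimality, $(\boldsymbol\lambda,\mathbf y)$ in this supremum may be restricted to satisfy: $y_n\in\{C,-d_0\}$; for each $i\in[n-1]$, $y_i=-d_0$ or $y_i=y_{i+1}+\lambda_{i+1}$; and $y_i\in\mathcal Y_i$ for all $i\in[n]$, where $\mathcal Y_i=\{-d_0+m:m=0,\dots,n-i\}\cup\{C+m:m=0,\dots,n-i\}$.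
   Context: Notation: $[m]=\{1,\dots,m\}$. $n,N\ge1$, $T>0$, $\mathcal S=\{\mathbf s\in\mathbb R^n:\mathbf s\ge0,\sum_is_i\le T\}$. Homogeneous costs: $c_1=\dots=c_n=1$ (waiting), $d_1=\dots=d_n=d_0\ge0$ (idleness), overtime $C\ge0$. Bounds $0\le u^L_i<u^U_i<\infty$; integer $K\in[n]$. $\Lambda=\{\boldsymbol\lambda\in\{0,1\}^n:\sum_i(1-\lambda_i)\le K\}$, $\Xi=\{(\boldsymbol\mu,\boldsymbol\lambda)\in\mathbb R^n\times\Lambda:u^L_i\lambda_i\le\mu_i\le u^U_i\lambda_i\ \forall i\}$; data $\widehat{\boldsymbol\xi}^j=(\widehat{\boldsymbol\mu}^j,\widehat{\boldsymbol\lambda}^j)\in\Xi$. For $\boldsymbol\xi=(\boldsymbol\mu,\boldsymbol\lambda)\in\Xi$, $g(\mathbf s,\boldsymbol\xi)$ is the optimal value of $\min_{\mathbf w\in\mathbb R^{n+1},\mathbf v\in\mathbb R^n}\sum_{i=1}^n(c_i\lambda_iw_i+d_iv_i)+Cw_{n+1}$ s.t. $w_i-v_{i-1}=\mu_{i-1}+w_{i-1}-s_{i-1}$ ($i=2,\dots,n+1$), $\mathbf w\ge0,w_1=0,\mathbf v\ge0$. For $\boldsymbol\lambda\in\Lambda$, $\mathcal Y(\boldsymbol\lambda)=\{\mathbf y\in\mathbb R^n:-y_i\le d_i\ \forall i;\ y_{i-1}-y_i\le c_i\lambda_i\ (i=2,\dots,n);\ y_n\le C\}$. $\|\cdot\|_p$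 is the $p$-norm on $\mathbb R^{2n}$. *)

theory Defs
  imports Complex_Main
begin

text \<open>Vectors in R^n are functions nat => real, indexed by 1..n (paper indexing);
  values outside the index range play no role.\<close>

definition S_set :: "nat \<Rightarrow> real \<Rightarrow> (nat \<Rightarrow> real) set" where
  "S_set n T = {s. (\<forall>i\<in>{1..n}. 0 \<le> s i) \<and> (\<Sum>i=1..n. s i) \<le> T}"

definition Lambda_set :: "nat \<Rightarrow> nat \<Rightarrow> (nat \<Rightarrow> real) set" where
  "Lambda_set n K = {lam. (\<forall>i\<in>{1..n}. lam i \<in> {0, 1}) \<and> (\<Sum>i=1..n. 1 - lam i) \<le> real K}"

definition Xi_set :: "nat \<Rightarrow> nat \<Rightarrow> (nat \<Rightarrow> real) \<Rightarrow> (nat \<Rightarrow> real) \<Rightarrow> ((nat \<Rightarrow> real) \<times> (nat \<Rightarrow> real)) set" where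
  "Xi_set n K uL uU = {(mu, lam). lam \<in> Lambda_set n K \<and>
      (\<forall>i\<in>{1..n}. uL i * lam i \<le> mu i \<and> mu i \<le> uU i * lam i)}"

definition g_feasible :: "nat \<Rightarrow> (nat \<Rightarrow> real) \<Rightarrow> (nat \<Rightarrow> real) \<Rightarrow> (nat \<Rightarrow> real) \<Rightarrow> (nat \<Rightarrow> real) \<Rightarrow> bool" where
  "g_feasible n s mu w v \<longleftrightarrow> w 1 = 0 \<and> (\<forall>i\<in>{1..n+1}. 0 \<le> w i) \<and> (\<forall>i\<in>{1..n}. 0 \<le> v i) \<and>
     (\<forall>i\<in>{2..n+1}. w i - v (i - 1) = mu (i - 1) + w (i - 1) - s (i - 1))"

definition g_val :: "nat \<Rightarrow> (nat \<Rightarrow> real) \<Rightarrow> (nat \<Rightarrow> real) \<Rightarrow> real \<Rightarrow> (nat \<Rightarrow> real)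
    \<Rightarrow> (nat \<Rightarrow> real) \<times> (nat \<Rightarrow> real) \<Rightarrow> real" where
  "g_val n c d C s xi = (case xi of (mu, lam) \<Rightarrow>
     Inf {(\<Sum>i=1..n. c i * lam i * w i + d i * v i) + C * w (n + 1) | w v. g_feasible n s mu w v})"

definition Y_set :: "nat \<Rightarrow> (nat \<Rightarrow> real) \<Rightarrow> (nat \<Rightarrow> real) \<Rightarrow> real \<Rightarrow> (nat \<Rightarrow> real) \<Rightarrow> (nat \<Rightarrow> real) set" where
  "Y_set n c d C lam = {y. (\<forall>i\<in>{1..n}. - y i \<le> d i) \<and>
      (\<forall>i\<in>{2..n}. y (i - 1) - y i \<le> c i * lam i) \<and> y n \<le> C}"

definition Yi_set :: "nat \<Rightarrow> real \<Rightarrow> real \<Rightarrow> nat \<Rightarrow> real set" where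
  "Yi_set n d0 C i = {- d0 + real m | m. m \<le> n - i} \<union> {C + real m | m. m \<le> n - i}"

text \<open>omega'_j(rho, s) for the data point (muh, lamh) = hat xi^j; the p-th power of the
  p-norm on R^{2n} is written out as a sum of p-th powers of absolute values.\<close>
definition omega' :: "nat \<Rightarrow> nat \<Rightarrow> (nat \<Rightarrow> real) \<Rightarrow> (nat \<Rightarrow> real) \<Rightarrow> (nat \<Rightarrow> real) \<Rightarrow> (nat \<Rightarrow> real)
    \<Rightarrow> real \<Rightarrow> real \<Rightarrow> (nat \<Rightarrow> real) \<Rightarrow> (nat \<Rightarrow> real) \<Rightarrow> real \<Rightarrow> (nat \<Rightarrow> real) \<Rightarrow> real" where
  "omega' n K uL uU c d C p muh lamh rho s =
     Sup {g_val n c d C s (mu, lam)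
           - rho * ((\<Sum>i=1..n. \<bar>mu i - muh i\<bar> powr p) + (\<Sum>i=1..n. \<bar>lam i - lamh i\<bar> powr p))
          | mu lam. (mu, lam) \<in> Xi_set n K uL uU}"

definition f_comp :: "(nat \<Rightarrow> real) \<Rightarrow> (nat \<Rightarrow> real) \<Rightarrow> real \<Rightarrow> (nat \<Rightarrow> real) \<Rightarrow> (nat \<Rightarrow> real)
    \<Rightarrow> real \<Rightarrow> (nat \<Rightarrow> real) \<Rightarrow> nat \<Rightarrow> real \<Rightarrow> real \<Rightarrow> real" where
  "f_comp uL uU p muh lamh rho s i lami yi =
     Sup {yi * (mu - s i) - rho * \<bar>mu - muh i\<bar> powr p - rho * \<bar>lami - lamh i\<bar> powr p
          | mu. uL i * lami \<le> mu \<and> mu \<le> uU i * lami}"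

end

theory Submission
  imports Defs
begin


lemma telescope:
  fixes y w v :: "nat \<Rightarrow> real"
  assumes "1 \<le> m"
  shows "(\<Sum>i=1..m. y i * (w (i+1) - w i - v i)) = y m * w (m+1) - y 1 * w 1 + (\<Sum>i=2..m. (y (i-1) - y i) * w i) - (\<Sum>i=1..m. y i * v i)"
  using assms
proof (induction m rule: nat_induct_at_least)
  case base
  then show ?case by (simp add: algebra_simps)
next
  case (Suc m)
  have "(\<Sum>i=2..Suc m. (y (i-1) - y i) * w i) = (\<Sum>i=2..m. (y (i-1) - y i) * w i) + (y m - y (Suc m)) * w (Suc m)"
    using Suc.hyps by simp
  then show ?case using Suc by (simp add: algebra_simps)
qed

lemma obj_expr:
  fixes y :: "nat \<Rightarrow> real"
  assumes feas: "g_feasible n s mu w v" and n1: "1 \<le> n"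
  shows "(\<Sum>i=1..n. y i * (mu i - s i)) = y n * w (n+1) + (\<Sum>i=2..n. (y (i-1) - y i) * w i) - (\<Sum>i=1..n. y i * v i)"
proof -
  have "(\<Sum>i=1..n. y i * (mu i - s i)) = (\<Sum>i=1..n. y i * (w (i+1) - w i - v i))"
  proof (rule sum.cong)
    fix i assume "i \<in> {1..n}"
    then have "i+1 \<in> {2..n+1}" by auto
    with feas have "w (i+1) - v (i+1-1) = mu (i+1-1) + w (i+1-1) - s (i+1-1)" unfolding g_feasible_def by blast
    then have "mu i - s i = w (i+1) - w i - v i" by simp
    then show "y i * (mu i - s i) = y i * (w (i+1) - w i - v i)" by simp
  qed simp
  also have "\<dots> = y n * w (n+1) - y 1 * w 1 + (\<Sum>i=2..n. (y (i-1) - y i) * w i) - (\<Sum>i=1..n. y i * v i)"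
    using telescope[OF n1] by simp
  finally show ?thesis using feas unfolding g_feasible_def by simp
qed

lemma obj_split:
  fixes lam w v :: "nat \<Rightarrow> real"
  assumes "w 1 = 0" "1 \<le> n"
  shows "(\<Sum>i=1..n. 1 * lam i * w i + d0 * v i) + C * w (n+1) = C * w (n+1) + (\<Sum>i=2..n. lam i * w i) + (\<Sum>i=1..n. d0 * v i)"
proof -
  have "(\<Sum>i=1..n. lam i * w i) = lam 1 * w 1 + (\<Sum>i=2..n. lam i * w i)"
    using sum.atLeast_Suc_atMost[OF assms(2), of "\<lambda>i. lam i * w i"] by (simp add: numeral_2_eq_2)
  then show ?thesis using assms(1) by (simp add: sum.distrib)
qed

lemma weak_dual:
  fixes y :: "nat \<Rightarrow> real"
  assumes feas: "g_feasible n s mu w v" and n1: "1 \<le> n" and y: "y \<in> Y_set n (\<lambda>_. 1) (\<lambda>_. d0) C lam"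
  shows "(\<Sum>i=1..n. y i * (mu i - s i)) \<le> (\<Sum>i=1..n. 1 * lam i * w i + d0 * v i) + C * w (n+1)"
proof -
  from feas have w1: "w 1 = 0" and wpos: "\<forall>i\<in>{1..n+1}. 0 \<le> w i" and vpos: "\<forall>i\<in>{1..n}. 0 \<le> v i"
    unfolding g_feasible_def by auto
  from y have y1: "\<forall>i\<in>{1..n}. - y i \<le> d0" and y2: "\<forall>i\<in>{2..n}. y (i-1) - y i \<le> lam i" and y3: "y n \<le> C"
    unfolding Y_set_def by auto
  have a: "y n * w (n+1) \<le> C * w (n+1)" using y3 wpos by (simp add: mult_right_mono)
  have b: "(\<Sum>i=2..n. (y (i-1) - y i) * w i) \<le> (\<Sum>i=2..n. lam i * w i)"
  proof (rule sum_mono)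
    fix i assume i: "i \<in> {2..n}"
    then have "0 \<le> w i" using wpos by auto
    then show "(y (i-1) - y i) * w i \<le> lam i * w i" using y2 i by (simp add: mult_right_mono)
  qed
  have c: "(\<Sum>i=1..n. - (y i * v i)) \<le> (\<Sum>i=1..n. d0 * v i)"
  proof (rule sum_mono)
    fix i assume i: "i \<in> {1..n}"
    have "- y i \<le> d0" "0 \<le> v i" using i vpos y1 by auto
    then have "(- y i) * v i \<le> d0 * v i" by (rule mult_right_mono)
    then show "- (y i * v i) \<le> d0 * v i" by simp
  qed
  show ?thesis unfolding obj_expr[OF feas n1] obj_split[of w, OF w1 n1] using a b c
    by (simp add: sum_negf)
qed

fun wseq :: "(nat \<Rightarrow> real) \<Rightarrow> (nat \<Rightarrow> real) \<Rightarrow> nat \<Rightarrow> real" where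
  "wseq mu s 0 = 0"
| "wseq mu s (Suc k) = max 0 (wseq mu s k + mu (Suc k) - s (Suc k))"

lemma wseq_nonneg: "0 \<le> wseq mu s k"
  by (cases k) auto

lemma wfeas: "g_feasible n s mu (\<lambda>i. wseq mu s (i-1)) (\<lambda>i. max 0 (- (wseq mu s (i-1) + mu i - s i)))"
  unfolding g_feasible_def
proof (intro conjI ballI)
  fix i assume i: "i \<in> {2..n+1}"
  then have e: "i - 1 = Suc (i - 1 - 1)" by auto
  define x where "x = wseq mu s (i - 1 - 1) + mu (i - 1) - s (i - 1)"
  obtain k where k: "i - 1 = Suc k" using e by blast
  then have k2: "i - 1 - 1 = k" by simp
  have "wseq mu s (i - 1) = max 0 x" unfolding x_def k2 k by simp
  then show "wseq mu s (i - 1) - max 0 (- (wseq mu s (i - 1 - 1) + mu (i - 1) - s (i - 1))) =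
         mu (i - 1) + wseq mu s (i - 1 - 1) - s (i - 1)"
    unfolding x_def[symmetric] by (simp add: x_def max_def)
qed (auto simp: wseq_nonneg)

lemma g_weak:
  fixes y :: "nat \<Rightarrow> real"
  assumes n1: "1 \<le> n" and y: "y \<in> Y_set n (\<lambda>_. 1) (\<lambda>_. d0) C lam"
  shows "(\<Sum>i=1..n. y i * (mu i - s i)) \<le> g_val n (\<lambda>_. 1) (\<lambda>_. d0) C s (mu, lam)"
  unfolding g_val_def prod.case
proof (rule cInf_greatest)
  show "{(\<Sum>i = 1..n. (\<lambda>_. 1) i * lam i * w i + (\<lambda>_. d0) i * v i) + C * w (n + 1) |w v. g_feasible n s mu w v} \<noteq> {}"
    using wfeas by blast
next
  fix x assume "x \<in> {(\<Sum>i = 1..n. (\<lambda>_. 1) i * lam i * w i + (\<lambda>_. d0) i * v i) + C * w (n + 1) |w v. g_feasible n s mu w v}"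
  then obtain w v where "g_feasible n s mu w v" "x = (\<Sum>i = 1..n. 1 * lam i * w i + d0 * v i) + C * w (n + 1)"
    by auto
  then show "(\<Sum>i=1..n. y i * (mu i - s i)) \<le> x" using weak_dual[OF _ n1 y] by simp
qed



fun ydual :: "nat \<Rightarrow> (nat \<Rightarrow> real) \<Rightarrow> (nat \<Rightarrow> real) \<Rightarrow> real \<Rightarrow> real \<Rightarrow> nat \<Rightarrow> real" where
  "ydual n w lam C d0 0 = (if 0 < w (n+1) then C else - d0)"
| "ydual n w lam C d0 (Suc k) = (if 0 < w (n - k) then ydual n w lam C d0 k + lam (n - k) else - d0)"

lemma ydual_range:
  assumes lam: "\<forall>i\<in>{1..n}. lam i \<in> {0,1}" and "k < n"
  shows "\<exists>m\<le>k. ydual n w lam C d0 k = - d0 + real m \<or> ydual n w lam C d0 k = C + real m"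
  using assms(2)
proof (induction k)
  case 0
  then show ?case by auto
next
  case (Suc k)
  then have kn: "k < n" by simp
  from Suc.IH[OF kn] obtain m where m: "m \<le> k" "ydual n w lam C d0 k = - d0 + real m \<or> ydual n w lam C d0 k = C + real m"
    by blast
  have "n - k \<in> {1..n}" using Suc.prems by auto
  then have l: "lam (n - k) = 0 \<or> lam (n - k) = 1" using lam by auto
  show ?case
  proof (cases "0 < w (n - k)")
    case False
    then show ?thesis by (intro exI[of _ 0]) simp
  next
    case True
    show ?thesis
    proof (cases "lam (n - k) = 0")
      case True
      then show ?thesis using \<open>0 < w (n - k)\<close> m by (intro exI[of _ m]) auto
    next
      case False
      then have "lam (n - k) = 1" using l by simp
      then show ?thesis using \<open>0 < w (n - k)\<close> m by (intro exI[of _ "Suc m"]) auto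
    qed
  qed
qed

lemma duality:
  assumes n1: "1 \<le> n" and d0: "0 \<le> d0" and C: "0 \<le> C" and lam: "\<forall>i\<in>{1..n}. lam i \<in> {0,1}"
  shows "\<exists>y. y \<in> Y_set n (\<lambda>_. 1) (\<lambda>_. d0) C lam \<and> (y n = C \<or> y n = - d0)
     \<and> (\<forall>i\<in>{1..n-1}. y i = - d0 \<or> y i = y (i+1) + lam (i+1))
     \<and> (\<forall>i\<in>{1..n}. y i \<in> Yi_set n d0 C i)
     \<and> g_val n (\<lambda>_. 1) (\<lambda>_. d0) C s (mu, lam) = (\<Sum>i=1..n. y i * (mu i - s i))"
proof -
  define w where "w i = wseq mu s (i - 1)" for i
  define v where "v i = max 0 (- (w i + mu i - s i))" for i
  define y where "y i = ydual n w lam C d0 (n - i)" for i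
  have feas: "g_feasible n s mu w v" unfolding w_def v_def by (rule wfeas)
  have wrec: "w (i+1) = max 0 (w i + mu i - s i)" if i1: "1 \<le> i" for i
  proof -
    obtain k where "i = Suc k" using i1 by (cases i) auto
    then show ?thesis unfolding w_def by simp
  qed
  have wnn: "0 \<le> w i" for i unfolding w_def by (rule wseq_nonneg)
  have yn: "y n = (if 0 < w (n+1) then C else - d0)" by (simp add: y_def)
  have yi: "y i = (if 0 < w (i+1) then y (i+1) + lam (i+1) else - d0)" if "1 \<le> i" "i < n" for i
  proof -
    have e1: "n - i = Suc (n - (i+1))" using that by simp
    have e2: "n - (n - (i+1)) = i + 1" using that by simp
    show ?thesis unfolding y_def e1 using e2 by simp
  qed
  have yr: "\<exists>m\<le>n - i. y i = - d0 + real m \<or> y i = C + real m" if "i \<in> {1..n}" for i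
    unfolding y_def using ydual_range[OF lam, of "n - i" w C d0] that by auto
  have ylow: "- d0 \<le> y i" if "i \<in> {1..n}" for i
    using yr[OF that] d0 C by auto
  have yY: "y \<in> Y_set n (\<lambda>_. 1) (\<lambda>_. d0) C lam"
    unfolding Y_set_def
  proof (intro CollectI conjI ballI)
    fix i assume "i \<in> {1..n}" then show "- y i \<le> d0" using ylow by force
  next
    fix i assume i: "i \<in> {2..n}"
    then have "lam i \<in> {0,1}" using lam by auto
    then have li: "0 \<le> lam i" by auto
    have "y (i - 1) = (if 0 < w (i - 1 + 1) then y (i - 1 + 1) + lam (i - 1 + 1) else - d0)"
      using i by (intro yi) auto
    then have "y (i - 1) = (if 0 < w i then y i + lam i else - d0)" using i by simp
    moreover have "- d0 \<le> y i" using i ylow by auto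
    ultimately show "y (i - 1) - y i \<le> 1 * lam i" using li by auto
  next
    show "y n \<le> C" using yn d0 C by auto
  qed
  have objeq: "(\<Sum>i=1..n. y i * (mu i - s i)) = (\<Sum>i=1..n. 1 * lam i * w i + d0 * v i) + C * w (n+1)"
  proof -
    have w1: "w 1 = 0" by (simp add: w_def)
    have a: "y n * w (n+1) = C * w (n+1)" using yn wnn[of "n+1"] by auto
    have b: "(\<Sum>i=2..n. (y (i-1) - y i) * w i) = (\<Sum>i=2..n. lam i * w i)"
    proof (rule sum.cong)
      fix i assume i: "i \<in> {2..n}"
      have "y (i - 1) = (if 0 < w (i - 1 + 1) then y (i - 1 + 1) + lam (i - 1 + 1) else - d0)"
        using i by (intro yi) auto
      then have "y (i - 1) = (if 0 < w i then y i + lam i else - d0)" using i by simp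
      then show "(y (i-1) - y i) * w i = lam i * w i" using wnn[of i] by (cases "0 < w i") auto
    qed simp
    have c: "(\<Sum>i=1..n. - (y i * v i)) = (\<Sum>i=1..n. d0 * v i)"
    proof (rule sum.cong)
      fix i assume i: "i \<in> {1..n}"
      show "- (y i * v i) = d0 * v i"
      proof (cases "0 < v i")
        case True
        then have "w (i+1) = 0" using wrec[of i] i unfolding v_def by auto
        moreover have "y i = (if 0 < w (i+1) then (if i < n then y (i+1) + lam (i+1) else C) else - d0)"
          using i yi[of i] yn by (cases "i < n") auto
        ultimately show ?thesis by simp
      next
        case False
        then have "v i = 0" unfolding v_def by auto
        then show ?thesis by simp
      qed
    qed simp
    show ?thesis unfolding obj_expr[OF feas n1] obj_split[of w, OF w1 n1] using a b c
      by (simp add: sum_negf)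
  qed
  have geq: "g_val n (\<lambda>_. 1) (\<lambda>_. d0) C s (mu, lam) = (\<Sum>i=1..n. y i * (mu i - s i))"
    unfolding g_val_def prod.case
  proof (rule cInf_eq_minimum)
    show "(\<Sum>i=1..n. y i * (mu i - s i)) \<in> {(\<Sum>i = 1..n. (\<lambda>_. 1) i * lam i * w i + (\<lambda>_. d0) i * v i) + C * w (n + 1) |w v. g_feasible n s mu w v}"
      using feas objeq by auto
  next
    fix x assume "x \<in> {(\<Sum>i = 1..n. (\<lambda>_. 1) i * lam i * w i + (\<lambda>_. d0) i * v i) + C * w (n + 1) |w v. g_feasible n s mu w v}"
    then obtain w' v' where "g_feasible n s mu w' v'" "x = (\<Sum>i = 1..n. 1 * lam i * w' i + d0 * v' i) + C * w' (n + 1)"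
      by auto
    then show "(\<Sum>i=1..n. y i * (mu i - s i)) \<le> x" using weak_dual[OF _ n1 yY] by simp
  qed
  have yi2: "\<forall>i\<in>{1..n-1}. y i = - d0 \<or> y i = y (i+1) + lam (i+1)"
  proof
    fix i assume "i \<in> {1..n-1}"
    then have "1 \<le> i" "i < n" using n1 by auto
    then show "y i = - d0 \<or> y i = y (i+1) + lam (i+1)" using yi[of i] by (cases "0 < w (i+1)") auto
  qed
  have yYi: "\<forall>i\<in>{1..n}. y i \<in> Yi_set n d0 C i"
    unfolding Yi_set_def using yr by blast
  show ?thesis using yY yn yi2 yYi geq by (intro exI[of _ y]) auto
qed

lemma elem_le:
  fixes yi mu si a b rho X Z p :: real
  assumes "0 \<le> rho" "a \<le> mu" "mu \<le> b"
  shows "yi * (mu - si) - rho * X powr p - rho * Z powr p \<le> \<bar>yi\<bar> * (\<bar>a\<bar> + \<bar>b\<bar> + \<bar>si\<bar>)"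
proof -
  have "\<bar>mu - si\<bar> \<le> \<bar>a\<bar> + \<bar>b\<bar> + \<bar>si\<bar>" using assms by (auto simp: abs_if)
  then have "\<bar>yi\<bar> * \<bar>mu - si\<bar> \<le> \<bar>yi\<bar> * (\<bar>a\<bar> + \<bar>b\<bar> + \<bar>si\<bar>)" by (simp add: mult_left_mono)
  moreover have "yi * (mu - si) \<le> \<bar>yi\<bar> * \<bar>mu - si\<bar>" by (metis abs_ge_self abs_mult)
  moreover have "0 \<le> rho * X powr p" "0 \<le> rho * Z powr p" using assms by auto
  ultimately show ?thesis by linarith
qed

lemma f_set_bdd:
  fixes yi rho p lami :: real and s muh lamh uL uU :: "nat \<Rightarrow> real"
  assumes "0 \<le> rho"
  shows "bdd_above {yi * (mu - s i) - rho * \<bar>mu - muh i\<bar> powr p - rho * \<bar>lami - lamh i\<bar> powr p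
          | mu. uL i * lami \<le> mu \<and> mu \<le> uU i * lami}"
proof (rule bdd_aboveI[where M = "\<bar>yi\<bar> * (\<bar>uL i * lami\<bar> + \<bar>uU i * lami\<bar> + \<bar>s i\<bar>)"])
  fix x assume "x \<in> {yi * (mu - s i) - rho * \<bar>mu - muh i\<bar> powr p - rho * \<bar>lami - lamh i\<bar> powr p
          | mu. uL i * lami \<le> mu \<and> mu \<le> uU i * lami}"
  then obtain mu where "x = yi * (mu - s i) - rho * \<bar>mu - muh i\<bar> powr p - rho * \<bar>lami - lamh i\<bar> powr p"
    "uL i * lami \<le> mu" "mu \<le> uU i * lami" by blast
  then show "x \<le> \<bar>yi\<bar> * (\<bar>uL i * lami\<bar> + \<bar>uU i * lami\<bar> + \<bar>s i\<bar>)"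
    using elem_le[OF assms] by blast
qed

lemma f_comp_le:
  assumes "0 \<le> rho" "uL i * lami \<le> uU i * lami"
  shows "f_comp uL uU p muh lamh rho s i lami yi \<le> \<bar>yi\<bar> * (\<bar>uL i * lami\<bar> + \<bar>uU i * lami\<bar> + \<bar>s i\<bar>)"
  unfolding f_comp_def
proof (rule cSup_least)
  show "{yi * (mu - s i) - rho * \<bar>mu - muh i\<bar> powr p - rho * \<bar>lami - lamh i\<bar> powr p
          | mu. uL i * lami \<le> mu \<and> mu \<le> uU i * lami} \<noteq> {}" using assms(2) by blast
next
  fix x assume "x \<in> {yi * (mu - s i) - rho * \<bar>mu - muh i\<bar> powr p - rho * \<bar>lami - lamh i\<bar> powr p
          | mu. uL i * lami \<le> mu \<and> mu \<le> uU i * lami}"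
  then obtain mu where "x = yi * (mu - s i) - rho * \<bar>mu - muh i\<bar> powr p - rho * \<bar>lami - lamh i\<bar> powr p"
    "uL i * lami \<le> mu" "mu \<le> uU i * lami" by blast
  then show "x \<le> \<bar>yi\<bar> * (\<bar>uL i * lami\<bar> + \<bar>uU i * lami\<bar> + \<bar>s i\<bar>)"
    using elem_le[OF assms(1)] by blast
qed

lemma f_comp_ge:
  assumes "0 \<le> rho" "uL i * lami \<le> mu" "mu \<le> uU i * lami"
  shows "yi * (mu - s i) - rho * \<bar>mu - muh i\<bar> powr p - rho * \<bar>lami - lamh i\<bar> powr p
     \<le> f_comp uL uU p muh lamh rho s i lami yi"
  unfolding f_comp_def
  by (rule cSup_upper) (use assms f_set_bdd[OF assms(1)] in auto)

lemma f_comp_approx: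
  assumes "0 \<le> rho" "uL i * lami \<le> uU i * lami" "0 < e"
  shows "\<exists>mu. uL i * lami \<le> mu \<and> mu \<le> uU i * lami \<and>
     f_comp uL uU p muh lamh rho s i lami yi - e < yi * (mu - s i) - rho * \<bar>mu - muh i\<bar> powr p - rho * \<bar>lami - lamh i\<bar> powr p"
proof -
  have "f_comp uL uU p muh lamh rho s i lami yi - e < f_comp uL uU p muh lamh rho s i lami yi" using assms by simp
  then have "f_comp uL uU p muh lamh rho s i lami yi - e < Sup {yi * (mu - s i) - rho * \<bar>mu - muh i\<bar> powr p - rho * \<bar>lami - lamh i\<bar> powr p
          | mu. uL i * lami \<le> mu \<and> mu \<le> uU i * lami}" unfolding f_comp_def .
  then show ?thesis
    by (rule less_cSupE) (use assms(2) in auto)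
qed



lemma sum_rewrite:
  fixes y mu lam muh lamh s :: "nat \<Rightarrow> real" and rho p :: real
  shows "(\<Sum>i=1..n. y i * (mu i - s i)) - rho * ((\<Sum>i=1..n. \<bar>mu i - muh i\<bar> powr p) + (\<Sum>i=1..n. \<bar>lam i - lamh i\<bar> powr p))
    = (\<Sum>i=1..n. y i * (mu i - s i) - rho * \<bar>mu i - muh i\<bar> powr p - rho * \<bar>lam i - lamh i\<bar> powr p)"
  by (simp add: sum_subtractf sum_distrib_left distrib_left)

theorem proposition4:
  fixes n N K :: nat and T d0 C p rho :: real
    and uL uU s :: "nat \<Rightarrow> real" and muhat lamhat :: "nat \<Rightarrow> nat \<Rightarrow> real" and j :: nat
  assumes "1 \<le> n" and "1 \<le> N" and "0 < T"
    and "0 \<le> d0" and "0 \<le> C"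
    and "\<forall>i\<in>{1..n}. 0 \<le> uL i \<and> uL i < uU i"
    and "1 \<le> K" and "K \<le> n"
    and "\<forall>k\<in>{1..N}. (muhat k, lamhat k) \<in> Xi_set n K uL uU"
    and "1 \<le> p" and "j \<in> {1..N}" and "0 \<le> rho" and "s \<in> S_set n T"
  shows "omega' n K uL uU (\<lambda>_. 1) (\<lambda>_. d0) C p (muhat j) (lamhat j) rho s =
           Sup {\<Sum>i=1..n. f_comp uL uU p (muhat j) (lamhat j) rho s i (lam i) (y i)
                | lam y. lam \<in> Lambda_set n K \<and> y \<in> Y_set n (\<lambda>_. 1) (\<lambda>_. d0) C lam}
       \<and> omega' n K uL uU (\<lambda>_. 1) (\<lambda>_. d0) C p (muhat j) (lamhat j) rho s =
           Sup {\<Sum>i=1..n. f_comp uL uU p (muhat j) (lamhat j) rho s i (lam i) (y i)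
                | lam y. lam \<in> Lambda_set n K \<and> y \<in> Y_set n (\<lambda>_. 1) (\<lambda>_. d0) C lam
                  \<and> (y n = C \<or> y n = - d0)
                  \<and> (\<forall>i\<in>{1..n-1}. y i = - d0 \<or> y i = y (i + 1) + lam (i + 1))
                  \<and> (\<forall>i\<in>{1..n}. y i \<in> Yi_set n d0 C i)}"
proof -
  note n1 = assms(1) and d0 = assms(4) and C = assms(5) and u = assms(6) and rho = assms(12)
  define A where "A = {g_val n (\<lambda>_. 1) (\<lambda>_. d0) C s (mu, lam)
           - rho * ((\<Sum>i=1..n. \<bar>mu i - muhat j i\<bar> powr p) + (\<Sum>i=1..n. \<bar>lam i - lamhat j i\<bar> powr p))
          | mu lam. (mu, lam) \<in> Xi_set n K uL uU}"
  define F where "F lam y = (\<Sum>i=1..n. f_comp uL uU p (muhat j) (lamhat j) rho s i (lam i) (y i))"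
    for lam y :: "nat \<Rightarrow> real"
  define B1 where "B1 = {F lam y | lam y. lam \<in> Lambda_set n K \<and> y \<in> Y_set n (\<lambda>_. 1) (\<lambda>_. d0) C lam}"
  define B2 where "B2 = {F lam y | lam y. lam \<in> Lambda_set n K \<and> y \<in> Y_set n (\<lambda>_. 1) (\<lambda>_. d0) C lam
                  \<and> (y n = C \<or> y n = - d0)
                  \<and> (\<forall>i\<in>{1..n-1}. y i = - d0 \<or> y i = y (i + 1) + lam (i + 1))
                  \<and> (\<forall>i\<in>{1..n}. y i \<in> Yi_set n d0 C i)}"
  have lam01: "lam i \<in> {0,1}" if "lam \<in> Lambda_set n K" "i \<in> {1..n}" for lam i
    using that unfolding Lambda_set_def by auto
  have box: "uL i * lam i \<le> uU i * lam i" if "lam \<in> Lambda_set n K" "i \<in> {1..n}" for lam i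
  proof -
    have "0 \<le> uL i \<and> uL i < uU i" using u that(2) by blast
    then show ?thesis using lam01[OF that] by auto
  qed
  have A_le: "\<exists>b\<in>B2. a \<le> b" if "a \<in> A" for a
  proof -
    from that obtain mu lam where a: "a = g_val n (\<lambda>_. 1) (\<lambda>_. d0) C s (mu, lam)
           - rho * ((\<Sum>i=1..n. \<bar>mu i - muhat j i\<bar> powr p) + (\<Sum>i=1..n. \<bar>lam i - lamhat j i\<bar> powr p))"
      and xi: "(mu, lam) \<in> Xi_set n K uL uU" unfolding A_def by blast
    from xi have lam: "lam \<in> Lambda_set n K" and mub: "\<forall>i\<in>{1..n}. uL i * lam i \<le> mu i \<and> mu i \<le> uU i * lam i"
      unfolding Xi_set_def by auto
    obtain y where y: "y \<in> Y_set n (\<lambda>_. 1) (\<lambda>_. d0) C lam" "(y n = C \<or> y n = - d0)"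
      "(\<forall>i\<in>{1..n-1}. y i = - d0 \<or> y i = y (i + 1) + lam (i + 1))"
      "(\<forall>i\<in>{1..n}. y i \<in> Yi_set n d0 C i)"
      and g: "g_val n (\<lambda>_. 1) (\<lambda>_. d0) C s (mu, lam) = (\<Sum>i=1..n. y i * (mu i - s i))"
      using duality[OF n1 d0 C, of lam s mu] lam01[OF lam] by auto
    have "a = (\<Sum>i=1..n. y i * (mu i - s i) - rho * \<bar>mu i - muhat j i\<bar> powr p - rho * \<bar>lam i - lamhat j i\<bar> powr p)"
      unfolding a g sum_rewrite ..
    also have "\<dots> \<le> F lam y" unfolding F_def
      by (rule sum_mono) (use mub rho in \<open>auto intro!: f_comp_ge\<close>)
    finally have "a \<le> F lam y" .
    moreover have "F lam y \<in> B2" unfolding B2_def using lam y by blast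
    ultimately show ?thesis by blast
  qed
  define M where "M = (\<Sum>i=1..n. (d0 + C + real n) * (\<bar>uL i\<bar> + \<bar>uU i\<bar> + \<bar>s i\<bar>))"
  have B2_le: "b \<le> M" if "b \<in> B2" for b
  proof -
    from that obtain lam y where b: "b = F lam y" and lam: "lam \<in> Lambda_set n K"
      and yi: "\<forall>i\<in>{1..n}. y i \<in> Yi_set n d0 C i" unfolding B2_def by blast
    have "F lam y \<le> M" unfolding F_def M_def
    proof (rule sum_mono)
      fix i assume i: "i \<in> {1..n}"
      have "\<bar>y i\<bar> \<le> d0 + C + real n"
      proof -
        from yi i obtain m where "m \<le> n - i" "y i = - d0 + real m \<or> y i = C + real m"
          unfolding Yi_set_def by blast
        then show ?thesis using d0 C by auto
      qed
      moreover have "\<bar>uL i * lam i\<bar> + \<bar>uU i * lam i\<bar> + \<bar>s i\<bar> \<le> \<bar>uL i\<bar> + \<bar>uU i\<bar> + \<bar>s i\<bar>"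
        using lam01[OF lam i] by auto
      ultimately have "\<bar>y i\<bar> * (\<bar>uL i * lam i\<bar> + \<bar>uU i * lam i\<bar> + \<bar>s i\<bar>) \<le> (d0 + C + real n) * (\<bar>uL i\<bar> + \<bar>uU i\<bar> + \<bar>s i\<bar>)"
        by (intro mult_mono) auto
      then show "f_comp uL uU p (muhat j) (lamhat j) rho s i (lam i) (y i) \<le> (d0 + C + real n) * (\<bar>uL i\<bar> + \<bar>uU i\<bar> + \<bar>s i\<bar>)"
        using f_comp_le[of rho uL i "lam i" uU, OF rho box[OF lam i]] by (meson order_trans)
    qed
    then show ?thesis using b by simp
  qed
  have bddB2: "bdd_above B2" using B2_le by (intro bdd_aboveI) auto
  have Ane: "A \<noteq> {}"
  proof -
    have "(muhat j, lamhat j) \<in> Xi_set n K uL uU" using assms(9,11) by blast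
    then show ?thesis unfolding A_def by blast
  qed
  have B2ne: "B2 \<noteq> {}" using Ane A_le by blast
  have A_B2: "Sup A \<le> Sup B2"
  proof (rule cSup_least[OF Ane])
    fix a assume "a \<in> A"
    then obtain b where "b \<in> B2" "a \<le> b" using A_le by blast
    then show "a \<le> Sup B2" using cSup_upper[OF _ bddB2] by fastforce
  qed
  have bddA: "bdd_above A"
  proof (rule bdd_aboveI)
    fix a assume "a \<in> A"
    then obtain b where "b \<in> B2" "a \<le> b" using A_le by blast
    then show "a \<le> Sup B2" using cSup_upper[OF _ bddB2] by fastforce
  qed
  have B1_le: "b \<le> Sup A" if "b \<in> B1" for b
  proof -
    from that obtain lam y where b: "b = F lam y" and lam: "lam \<in> Lambda_set n K"
      and y: "y \<in> Y_set n (\<lambda>_. 1) (\<lambda>_. d0) C lam" unfolding B1_def by blast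
    have "F lam y \<le> Sup A + e" if e: "0 < e" for e
    proof -
      define e' where "e' = e / real n"
      have e': "0 < e'" unfolding e'_def using e n1 by simp
      have "\<forall>i\<in>{1..n}. \<exists>m. uL i * lam i \<le> m \<and> m \<le> uU i * lam i \<and>
         f_comp uL uU p (muhat j) (lamhat j) rho s i (lam i) (y i) - e' < y i * (m - s i) - rho * \<bar>m - muhat j i\<bar> powr p - rho * \<bar>lam i - lamhat j i\<bar> powr p"
      proof
        fix i assume i: "i \<in> {1..n}"
        show "\<exists>m. uL i * lam i \<le> m \<and> m \<le> uU i * lam i \<and>
         f_comp uL uU p (muhat j) (lamhat j) rho s i (lam i) (y i) - e' < y i * (m - s i) - rho * \<bar>m - muhat j i\<bar> powr p - rho * \<bar>lam i - lamhat j i\<bar> powr p"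
          by (rule f_comp_approx[of rho uL i "lam i" uU, OF rho box[OF lam i] e'])
      qed
      from bchoice[OF this] obtain mu where mu: "\<forall>i\<in>{1..n}. uL i * lam i \<le> mu i \<and> mu i \<le> uU i * lam i \<and>
         f_comp uL uU p (muhat j) (lamhat j) rho s i (lam i) (y i) - e' < y i * (mu i - s i) - rho * \<bar>mu i - muhat j i\<bar> powr p - rho * \<bar>lam i - lamhat j i\<bar> powr p"
        by blast
      have xi: "(mu, lam) \<in> Xi_set n K uL uU" unfolding Xi_set_def using lam mu by auto
      have "F lam y - e = (\<Sum>i=1..n. f_comp uL uU p (muhat j) (lamhat j) rho s i (lam i) (y i) - e')"
        unfolding F_def e'_def using n1 by (simp add: sum_subtractf)
      also have "\<dots> \<le> (\<Sum>i=1..n. y i * (mu i - s i) - rho * \<bar>mu i - muhat j i\<bar> powr p - rho * \<bar>lam i - lamhat j i\<bar> powr p)"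
        by (rule sum_mono) (use mu in \<open>auto intro: less_imp_le\<close>)
      also have "\<dots> = (\<Sum>i=1..n. y i * (mu i - s i)) - rho * ((\<Sum>i=1..n. \<bar>mu i - muhat j i\<bar> powr p) + (\<Sum>i=1..n. \<bar>lam i - lamhat j i\<bar> powr p))"
        by (rule sum_rewrite[symmetric])
      also have "\<dots> \<le> g_val n (\<lambda>_. 1) (\<lambda>_. d0) C s (mu, lam) - rho * ((\<Sum>i=1..n. \<bar>mu i - muhat j i\<bar> powr p) + (\<Sum>i=1..n. \<bar>lam i - lamhat j i\<bar> powr p))"
        using g_weak[OF n1 y, of mu s] by linarith
      also have "\<dots> \<le> Sup A"
        by (rule cSup_upper[OF _ bddA]) (use xi in \<open>unfold A_def, blast\<close>)
      finally show ?thesis by linarith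
    qed
    then have "F lam y \<le> Sup A" by (rule field_le_epsilon)
    then show ?thesis using b by simp
  qed
  have bddB1: "bdd_above B1" using B1_le by (intro bdd_aboveI) auto
  have sub: "B2 \<subseteq> B1" unfolding B1_def B2_def by blast
  have B1ne: "B1 \<noteq> {}" using sub B2ne by blast
  have B1_A: "Sup B1 \<le> Sup A" by (rule cSup_least[OF B1ne B1_le])
  have B2_B1: "Sup B2 \<le> Sup B1" by (rule cSup_subset_mono[OF B2ne bddB1 sub])
  have e1: "Sup A = Sup B1" and e2: "Sup A = Sup B2" using A_B2 B1_A B2_B1 by linarith+
  have om: "omega' n K uL uU (\<lambda>_. 1) (\<lambda>_. d0) C p (muhat j) (lamhat j) rho s = Sup A"
    unfolding omega'_def A_def ..
  show ?thesis using om e1 e2 unfolding B1_def B2_def F_def by (intro conjI) (rule trans, assumption, assumption)+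
qed

end
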